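(* Let $\mathcal C$ be a linear $[n,k]$ MDS code over $F=\mathrm{GF}(q)$ with $k<n$, and let $L\in\mathbb Z^+$ satisfy $L<\binom{n}{k}$. If $q\ge\binom{n}{k+1}$, then $\mathcal C$ is not $(n-k,L)$-list decodable.
   Context: For $L\in\mathbb Z^+$ and $\tau\in\mathbb Z_{\ge0}$, a code $\mathcal C\subseteq F^n$ is $(\tau,L)$-list decodable if for every $y\in F^n$ at most $L$ codewords of $\mathcal C$ lie at Hamming distance at most $\tau$ from $y$. *)

theory Defs
  imports Main
begin

text \<open>Vectors of F^n are represented as functions nat => F vanishing outside {0..<n}.\<close>

definition vecs :: "nat \<Rightarrow> (nat \<Rightarrow> 'a::zero) set" where
  "vecs n = {x. \<forall>i\<ge>n. x i = 0}"

definition hamming_dist :: "nat \<Rightarrow> (nat \<Rightarrow> 'a) \<Rightarrow> (nat \<Rightarrow> 'a) \<Rightarrow> nat" where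
  "hamming_dist n x y = card {i. i < n \<and> x i \<noteq> y i}"

definition encode :: "nat \<Rightarrow> nat \<Rightarrow> (nat \<Rightarrow> nat \<Rightarrow> 'a::comm_ring_1) \<Rightarrow> (nat \<Rightarrow> 'a) \<Rightarrow> (nat \<Rightarrow> 'a)" where
  "encode n k G u = (\<lambda>j. if j < n then (\<Sum>i<k. u i * G i j) else 0)"

text \<open>C is a linear [n,k] code over the field F: the image of F^k under an injective
  linear map given by a generator matrix (i.e. a k-dimensional subspace of F^n).\<close>
definition linear_code :: "nat \<Rightarrow> nat \<Rightarrow> (nat \<Rightarrow> 'a::field) set \<Rightarrow> bool" where
  "linear_code n k C \<longleftrightarrow> (\<exists>G. inj_on (encode n k G) (vecs k) \<and> C = encode n k G ` vecs k)"

definition min_distance :: "nat \<Rightarrow> (nat \<Rightarrow> 'a) set \<Rightarrow> nat" where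
  "min_distance n C = Min {hamming_dist n x y | x y. x \<in> C \<and> y \<in> C \<and> x \<noteq> y}"

definition MDS_code :: "nat \<Rightarrow> nat \<Rightarrow> (nat \<Rightarrow> 'a::field) set \<Rightarrow> bool" where
  "MDS_code n k C \<longleftrightarrow> linear_code n k C \<and> min_distance n C = n - k + 1"

definition list_decodable :: "nat \<Rightarrow> (nat \<Rightarrow> 'a::zero) set \<Rightarrow> nat \<Rightarrow> nat \<Rightarrow> bool" where
  "list_decodable n C \<tau> L \<longleftrightarrow>
     (\<forall>y\<in>vecs n. card {c \<in> C. hamming_dist n c y \<le> \<tau>} \<le> L)"

end

theory Submission
  imports Defs "HOL-Library.FuncSet"
begin

lemma hd_le_n: "hamming_dist n x y \<le> n"
  unfolding hamming_dist_def by (rule order.trans[OF card_mono[of "{..<n}"]]) auto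

lemma mds_unique:
  assumes "MDS_code n k C" "c \<in> C" "c' \<in> C" "S \<subseteq> {..<n}" "card S = k"
    "\<forall>i\<in>S. c i = c' i"
  shows "c = c'"
proof (rule ccontr)
  assume ne: "c \<noteq> c'"
  have fin: "finite {hamming_dist n x y | x y. x \<in> C \<and> y \<in> C \<and> x \<noteq> y}"
    by (rule finite_subset[of _ "{..n}"]) (auto simp: hd_le_n)
  have "min_distance n C \<le> hamming_dist n c c'"
    unfolding min_distance_def using ne assms(2,3) by (intro Min_le[OF fin]) auto
  moreover have "hamming_dist n c c' \<le> card ({..<n} - S)"
    unfolding hamming_dist_def using assms(6) by (intro card_mono) auto
  moreover have "card ({..<n} - S) = n - k"
    using assms(4,5) by (subst card_Diff_subset) (auto intro: finite_subset)
  ultimately show False using assms(1) unfolding MDS_code_def by auto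
qed

lemma greedy:
  fixes C :: "(nat \<Rightarrow> 'a::{finite,field}) set"
  assumes uniq: "\<And>c c' S. c\<in>C \<Longrightarrow> c'\<in>C \<Longrightarrow> S \<subseteq> {..<n} \<Longrightarrow> card S = k \<Longrightarrow> (\<forall>i\<in>S. c i = c' i) \<Longrightarrow> c = c'"
    and q: "(n-1) choose k < card (UNIV :: 'a set)"
  shows "m \<le> n \<Longrightarrow> \<exists>y\<in>vecs n. \<forall>c\<in>C. \<forall>U. U \<subseteq> {..<m} \<and> card U = Suc k \<longrightarrow> \<not>(\<forall>i\<in>U. c i = y i)"
proof (induction m)
  case 0
  show ?case by (rule bexI[of _ "\<lambda>_. 0"]) (auto simp: vecs_def)
next
  case (Suc m)
  then obtain y where y: "y \<in> vecs n" and
    yh: "\<forall>c\<in>C. \<forall>U. U \<subseteq> {..<m} \<and> card U = Suc k \<longrightarrow> \<not>(\<forall>i\<in>U. c i = y i)" by auto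
  have mn: "m < n" using Suc by auto
  define Sets where "Sets = {S. S \<subseteq> {..<m} \<and> card S = k}"
  define f where "f S = (THE c. c\<in>C \<and> (\<forall>i\<in>S. c i = y i)) m" for S
  define V where "V = {c m | c S. c\<in>C \<and> S \<in> Sets \<and> (\<forall>i\<in>S. c i = y i)}"
  have "V \<subseteq> f ` Sets"
  proof
    fix v assume "v \<in> V"
    then obtain c S where c: "c \<in> C" "S \<in> Sets" "\<forall>i\<in>S. c i = y i" "v = c m"
      unfolding V_def by auto
    have "(THE c. c\<in>C \<and> (\<forall>i\<in>S. c i = y i)) = c"
    proof (rule the_equality)
      fix c'
      assume h: "c'\<in>C \<and> (\<forall>i\<in>S. c' i = y i)"
      have "S \<subseteq> {..<n}" using c(2) mn unfolding Sets_def by auto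
      moreover have "card S = k" using c(2) unfolding Sets_def by auto
      ultimately show "c' = c" using uniq[of c' c S] h c(1,3) by auto
    qed (use c in auto)
    then show "v \<in> f ` Sets" using c unfolding f_def by auto
  qed
  moreover have fS: "finite Sets" unfolding Sets_def by simp
  ultimately have "card V \<le> card (f ` Sets)" by (intro card_mono) auto
  also have "\<dots> \<le> card Sets" by (rule card_image_le[OF fS])
  also have "card Sets = m choose k" unfolding Sets_def by (subst n_subsets) auto
  also have "\<dots> \<le> (n-1) choose k"
  proof -
    have "{S. S \<subseteq> {..<m} \<and> card S = k} \<subseteq> {S. S \<subseteq> {..<n-1} \<and> card S = k}" using mn by auto
    hence "card {S. S \<subseteq> {..<m} \<and> card S = k} \<le> card {S. S \<subseteq> {..<n-1} \<and> card S = k}"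
      by (intro card_mono) auto
    thus ?thesis by (simp add: n_subsets)
  qed
  finally have "card V < card (UNIV :: 'a set)" using q by linarith
  hence "V \<noteq> UNIV" by auto
  then obtain t where t: "t \<notin> V" by auto
  define y' where "y' = y(m := t)"
  have "y' \<in> vecs n" using y mn unfolding vecs_def y'_def by auto
  moreover have "\<forall>c\<in>C. \<forall>U. U \<subseteq> {..<Suc m} \<and> card U = Suc k \<longrightarrow> \<not>(\<forall>i\<in>U. c i = y' i)"
  proof (intro ballI allI impI notI)
    fix c U assume c: "c \<in> C" and U: "U \<subseteq> {..<Suc m} \<and> card U = Suc k" and ag: "\<forall>i\<in>U. c i = y' i"
    show False
    proof (cases "m \<in> U")
      case False
      hence "U \<subseteq> {..<m}" using U by (auto simp: less_Suc_eq subset_iff)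
      moreover have "\<forall>i\<in>U. c i = y i" using ag False unfolding y'_def by auto
      ultimately show False using yh c U by blast
    next
      case True
      define S where "S = U - {m}"
      have fU: "finite U" using U finite_subset by blast
      have "S \<in> Sets" unfolding Sets_def S_def using U True fU by auto
      moreover have "\<forall>i\<in>S. c i = y i" using ag unfolding S_def y'_def by auto
      ultimately have "c m \<in> V" unfolding V_def using c by blast
      moreover have "c m = t" using ag True unfolding y'_def by auto
      ultimately show False using t by simp
    qed
  qed
  ultimately show ?case by blast
qed

lemma rPi: "restrict f I \<in> PiE I (\<lambda>_. UNIV)" by (simp add: restrict_PiE_iff)

lemma card_vecs:
  "finite (vecs k :: (nat \<Rightarrow> 'a::{finite,zero}) set) \<and> card (vecs k :: (nat \<Rightarrow> 'a) set) = card (UNIV::'a set) ^ k"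
proof -
  let ?r = "\<lambda>x::nat \<Rightarrow> 'a. restrict x {..<k}"
  have inj: "inj_on ?r (vecs k)"
  proof (rule inj_onI)
    fix x y assume "x \<in> vecs k" "y \<in> vecs k" "?r x = ?r y"
    show "x = y"
    proof
      fix i show "x i = y i"
      proof (cases "i < k")
        case True
        hence "?r x i = ?r y i" using \<open>?r x = ?r y\<close> by simp
        thus ?thesis using True by simp
      next
        case False thus ?thesis using \<open>x \<in> vecs k\<close> \<open>y \<in> vecs k\<close> unfolding vecs_def by simp
      qed
    qed
  qed
  have img: "?r ` vecs k = PiE {..<k} (\<lambda>_. UNIV)"
  proof
    show "?r ` vecs k \<subseteq> PiE {..<k} (\<lambda>_. UNIV)" by (rule image_subsetI, rule rPi)
    show "PiE {..<k} (\<lambda>_. UNIV) \<subseteq> ?r ` vecs k"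
    proof
      fix g assume g: "g \<in> PiE {..<k} (\<lambda>_. (UNIV::'a set))"
      let ?x = "\<lambda>i. if i < k then g i else 0"
      have xin: "?x \<in> vecs k" unfolding vecs_def by auto
      have req: "?r ?x = g" using g by (auto simp: restrict_def PiE_def extensional_def)
      show "g \<in> ?r ` vecs k" using image_eqI[of g ?r ?x "vecs k"] xin req by simp
    qed
  qed
  have fP: "finite (PiE {..<k} (\<lambda>_. (UNIV::'a set)))" by (rule finite_PiE) auto
  have "finite (vecs k :: (nat \<Rightarrow> 'a) set)"
    using finite_imageD[OF _ inj] img fP by simp
  moreover have "card (vecs k :: (nat \<Rightarrow> 'a) set) = card (PiE {..<k} (\<lambda>_. (UNIV::'a set)))"
    using card_image[OF inj] img by simp
  moreover have "card (PiE {..<k} (\<lambda>_. (UNIV::'a set))) = card (UNIV::'a set) ^ k"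
    by (simp add: card_PiE)
  ultimately show ?thesis by simp
qed

theorem mainTheorem6:
  fixes C :: "(nat \<Rightarrow> 'a::{finite,field}) set" and n k L :: nat
  assumes "MDS_code n k C"
    and "k < n"
    and "0 < L" and "L < n choose k"
    and "card (UNIV :: 'a set) \<ge> n choose (k + 1)"
  shows "\<not> list_decodable n C (n - k) L"
proof
  assume LD: "list_decodable n C (n - k) L"
  obtain G where G: "inj_on (encode n k G) (vecs k)" "C = encode n k G ` vecs k"
    using assms(1) unfolding MDS_code_def linear_code_def by auto
  have uniq: "\<And>c c' S. c\<in>C \<Longrightarrow> c'\<in>C \<Longrightarrow> S \<subseteq> {..<n} \<Longrightarrow> card S = k \<Longrightarrow> (\<forall>i\<in>S. c i = c' i) \<Longrightarrow> c = c'"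
    using mds_unique[OF assms(1)] by blast
  have q2: "2 \<le> card (UNIV :: 'a set)"
  proof -
    have "{0::'a, 1} \<subseteq> UNIV" by simp
    hence "card {0::'a, 1} \<le> card (UNIV :: 'a set)" by (intro card_mono) auto
    thus ?thesis by simp
  qed
  have q: "(n-1) choose k < card (UNIV :: 'a set)"
  proof (cases "k + 1 \<le> n - 1")
    case True
    obtain m where m: "n = Suc m" using assms(2) by (cases n) auto
    have "n choose (k+1) = ((n-1) choose k) + ((n-1) choose (Suc k))"
      unfolding m by simp
    moreover have "0 < (n-1) choose (Suc k)" using True by simp
    ultimately show ?thesis using assms(5) by linarith
  next
    case False
    hence "k = n - 1" using assms(2) by simp
    thus ?thesis using q2 by simp
  qed
  have "\<exists>y\<in>vecs n. \<forall>c\<in>C. \<forall>U. U \<subseteq> {..<n} \<and> card U = Suc k \<longrightarrow> \<not>(\<forall>i\<in>U. c i = y i)"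
    by (rule greedy[OF uniq q]) simp_all
  then obtain y where y: "y \<in> vecs n" and
    deep: "\<forall>c\<in>C. \<forall>U. U \<subseteq> {..<n} \<and> card U = Suc k \<longrightarrow> \<not>(\<forall>i\<in>U. c i = y i)"
    by blast
  have cv: "finite (vecs k :: (nat \<Rightarrow> 'a) set)" "card (vecs k :: (nat \<Rightarrow> 'a) set) = card (UNIV::'a set) ^ k"
    using card_vecs by blast+
  have finC: "finite C" using G cv by simp
  have cardC: "card C = card (UNIV::'a set) ^ k" using G(2) card_image[OF G(1)] cv by simp
  have ex: "\<exists>c\<in>C. \<forall>i\<in>S. c i = y i" if S: "S \<subseteq> {..<n}" "card S = k" for S
  proof -
    have fS: "finite S" using S finite_subset by blast
    let ?\<rho> = "\<lambda>c. restrict c S"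
    have inj: "inj_on ?\<rho> C"
    proof (rule inj_onI)
      fix c c' assume "c \<in> C" "c' \<in> C" "?\<rho> c = ?\<rho> c'"
      moreover have "\<forall>i\<in>S. c i = c' i"
      proof
        fix i assume "i \<in> S"
        have "restrict c S i = restrict c' S i" using \<open>?\<rho> c = ?\<rho> c'\<close> by simp
        thus "c i = c' i" using \<open>i \<in> S\<close> by simp
      qed
      ultimately show "c = c'" using uniq S by blast
    qed
    have sub: "?\<rho> ` C \<subseteq> PiE S (\<lambda>_. UNIV)" by (rule image_subsetI, rule rPi)
    have fP: "finite (PiE S (\<lambda>_. (UNIV::'a set)))" by (rule finite_PiE[OF fS]) auto
    have "card (?\<rho> ` C) = card (PiE S (\<lambda>_. (UNIV::'a set)))"
      using card_image[OF inj] cardC S by (simp add: card_PiE fS)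
    hence "?\<rho> ` C = PiE S (\<lambda>_. UNIV)" using card_subset_eq[OF fP sub] by simp
    moreover have "restrict y S \<in> PiE S (\<lambda>_. UNIV)" by (rule rPi)
    ultimately obtain c where c: "c \<in> C" "restrict y S = restrict c S" by blast
    have "\<forall>i\<in>S. c i = y i"
    proof
      fix i assume "i \<in> S"
      have "restrict y S i = restrict c S i" using c(2) by simp
      thus "c i = y i" using \<open>i \<in> S\<close> by simp
    qed
    thus ?thesis using c(1) by blast
  qed
  define Sets where "Sets = {S. S \<subseteq> {..<n} \<and> card S = k}"
  define g where "g S = (SOME c. c \<in> C \<and> (\<forall>i\<in>S. c i = y i))" for S
  have gS: "g S \<in> C \<and> (\<forall>i\<in>S. g S i = y i)" if "S \<in> Sets" for S
  proof -
    have "\<exists>c. c \<in> C \<and> (\<forall>i\<in>S. c i = y i)" using ex[of S] that unfolding Sets_def by blast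
    thus ?thesis unfolding g_def by (rule someI_ex)
  qed
  have inj: "inj_on g Sets"
  proof (rule inj_onI, rule ccontr)
    fix S T assume S: "S \<in> Sets" and T: "T \<in> Sets" and eq: "g S = g T" and ne: "S \<noteq> T"
    have fST: "finite (S \<union> T)" using S T unfolding Sets_def by (auto intro: finite_subset)
    have "\<not> T \<subseteq> S"
    proof
      assume "T \<subseteq> S"
      moreover have "card T = card S" using S T unfolding Sets_def by simp
      moreover have "finite S" using fST by simp
      ultimately show False using ne card_subset_eq[of S T] by simp
    qed
    hence "S \<subset> S \<union> T" by auto
    hence "card S < card (S \<union> T)" by (rule psubset_card_mono[OF fST])
    hence "Suc k \<le> card (S \<union> T)" using S unfolding Sets_def by simp
    then obtain U where U: "U \<subseteq> S \<union> T" "card U = Suc k" by (meson obtain_subset_with_card_n)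
    have "\<forall>i\<in>U. g S i = y i" using U(1) gS[OF S] gS[OF T] eq by auto
    moreover have "U \<subseteq> {..<n}" using U(1) S T unfolding Sets_def by auto
    ultimately show False using deep gS[OF S] U(2) by blast
  qed
  have "g ` Sets \<subseteq> {c \<in> C. hamming_dist n c y \<le> n - k}"
  proof
    fix c assume "c \<in> g ` Sets"
    then obtain S where S: "S \<in> Sets" "c = g S" by auto
    have "hamming_dist n c y \<le> card ({..<n} - S)"
      unfolding hamming_dist_def using gS[OF S(1)] S(2) by (intro card_mono) auto
    also have "card ({..<n} - S) = n - k"
      using S(1) unfolding Sets_def by (subst card_Diff_subset) (auto intro: finite_subset)
    finally show "c \<in> {c \<in> C. hamming_dist n c y \<le> n - k}" using gS[OF S(1)] S(2) by auto
  qed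
  hence "card (g ` Sets) \<le> card {c \<in> C. hamming_dist n c y \<le> n - k}"
    using finC by (intro card_mono) auto
  moreover have "card (g ` Sets) = n choose k"
    using card_image[OF inj] unfolding Sets_def by (simp add: n_subsets)
  moreover have "card {c \<in> C. hamming_dist n c y \<le> n - k} \<le> L"
    using LD y unfolding list_decodable_def by blast
  ultimately show False using assms(4) by linarith
qed

end
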